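(* Let $\Lambda_1$ be a probability measure on $[0,1]$ with $\Lambda_1(\{0\})=0$ (or $\Lambda_1\equiv0$), and let $$\Psi_1(q)=\int_{[0,1]}(qy-1+(1-y)^q)\frac{\Lambda_1(dy)}{y^2},\qquad q\ge1.$$ If $\int_{[0,1]}\frac{1}{\sqrt y}\Lambda_1(dy)<\infty$, then $\lim_{q\to\infty}\Psi_1(q)/q^{3/2}=0$.
   Context: In the paper, $\Lambda_1$ arises from a probability measure $\Lambda$ on $[0,1]$ with $\Lambda(\{0\})=c\in(0,1]$ via $\Lambda=c\delta_0+(1-c)\Lambda_1$. *)

theory Defs
  imports "HOL-Probability.Probability"
begin

text \<open>Psi_1(q) = integral over [0,1] of (q y - 1 + (1-y)^q) / y^2 with respect to Lambda_1.
  The value of the integrand at y = 0 is irrelevant since Lambda_1({0}) = 0.\<close>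
definition Psi1 :: "real measure \<Rightarrow> real \<Rightarrow> real" where
  "Psi1 L q = (\<integral> y. (q * y - 1 + (1 - y) powr q) / y\<^sup>2 \<partial>L)"

end

theory Submission imports Defs "HOL-Real_Asymp.Real_Asymp" begin

lemma bern:
  fixes y q :: real assumes "0 \<le> y" "y \<le> 1" "1 \<le> q"
  shows "1 - q * y \<le> (1 - y) powr q"
proof (cases "y = 1")
  case True then show ?thesis using assms by simp
next
  case False
  hence y1: "y < 1" using assms by simp
  let ?g = "\<lambda>t. (1 - t) powr q - 1 + q * t"
  have "?g 0 \<le> ?g y"
  proof (rule DERIV_nonneg_imp_nondecreasing[OF assms(1)])
    fix x assume x: "0 \<le> x" "x \<le> y"
    have "DERIV ?g x :> (q * (1 - x) powr (q - 1) * (-1) + q)"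
      using x y1 by (auto intro!: derivative_eq_intros)
    moreover have "(1 - x) powr (q - 1) \<le> 1"
      using x y1 assms powr_mono2[of "q-1" "1-x" 1] by simp
    hence "q * (1 - x) powr (q - 1) * (-1) + q \<ge> 0" using assms
      by (simp add: algebra_simps mult_left_le)
    ultimately show "\<exists>d. DERIV ?g x :> d \<and> d \<ge> 0" by blast
  qed
  thus ?thesis by simp
qed

lemma expb:
  fixes t :: real assumes "0 \<le> t"
  shows "exp (- t) \<le> 1 - t + t^2 / 2"
proof -
  let ?h = "\<lambda>t. 1 - t + t^2 / 2 - exp (- t)"
  have "?h 0 \<le> ?h t"
  proof (rule DERIV_nonneg_imp_nondecreasing[OF assms])
    fix x assume x: "0 \<le> x" "x \<le> t"
    have "DERIV ?h x :> (- 1 + x + exp (- x))"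
      by (auto intro!: derivative_eq_intros simp: power2_eq_square)
    moreover have "- 1 + x + exp (- x) \<ge> 0" using exp_ge_add_one_self[of "-x"] by simp
    ultimately show "\<exists>d. DERIV ?h x :> d \<and> d \<ge> 0" by blast
  qed
  thus ?thesis by simp
qed

lemma upper:
  fixes y q :: real assumes "0 \<le> y" "y \<le> 1" "0 \<le> q"
  shows "(1 - y) powr q \<le> exp (- (q * y))"
proof (cases "y = 1")
  case True then show ?thesis using assms by simp
next
  case False
  hence "0 < 1 - y" using assms by simp
  hence "(1 - y) powr q = exp (q * ln (1 - y))" by (simp add: powr_def)
  moreover have "ln (1 - y) \<le> - y" using ln_le_minus_one[of "1-y"] \<open>0 < 1 - y\<close> by simp
  hence "q * ln (1 - y) \<le> - (q * y)" using assms mult_left_mono[of "ln (1-y)" "-y" q] by simp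
  ultimately show ?thesis by simp
qed

lemma key:
  fixes y q :: real assumes "0 < y" "y \<le> 1" "1 \<le> q"
  shows "0 \<le> q * y - 1 + (1 - y) powr q"
    and "q * y - 1 + (1 - y) powr q \<le> q * y"
    and "q * y - 1 + (1 - y) powr q \<le> (q * y) * sqrt (q * y)"
proof -
  show "0 \<le> q * y - 1 + (1 - y) powr q" using bern[of y q] assms by simp
  have "(1 - y) powr q \<le> 1" using assms powr_mono2[of q "1-y" 1] by simp
  thus "q * y - 1 + (1 - y) powr q \<le> q * y" by simp
  define t where "t = q * y"
  have t0: "0 \<le> t" using assms by (simp add: t_def)
  have A: "q * y - 1 + (1 - y) powr q \<le> t" using \<open>(1 - y) powr q \<le> 1\<close> by (simp add: t_def)
  have B: "q * y - 1 + (1 - y) powr q \<le> t^2 / 2"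
    using upper[of y q] expb[OF t0] assms by (simp add: t_def)
  show "q * y - 1 + (1 - y) powr q \<le> (q * y) * sqrt (q * y)"
  proof (cases "t \<ge> 1")
    case True
    hence "1 \<le> sqrt t" by simp
    hence "t \<le> t * sqrt t" using t0 by (simp add: mult_left_mono[of 1 "sqrt t" t, simplified])
    thus ?thesis using A by (simp add: t_def)
  next
    case False
    hence "sqrt t \<le> 1" using t0 by simp
    hence "sqrt t * sqrt t \<le> sqrt t * 1" using t0 by (intro mult_left_mono) auto
    hence "t \<le> sqrt t" using t0 by simp
    have "t^2 / 2 \<le> t * t" using t0 by (simp add: power2_eq_square)
    also have "\<dots> \<le> t * sqrt t" using \<open>t \<le> sqrt t\<close> t0 by (simp add: mult_left_mono)
    finally show ?thesis using B by (simp add: t_def)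
  qed
qed

lemma pointwise_bound:
  fixes y q :: real assumes "0 < y" "y \<le> 1" "1 \<le> q"
  shows "0 \<le> (q * y - 1 + (1 - y) powr q) / y\<^sup>2 / q powr (3/2)"
    and "(q * y - 1 + (1 - y) powr q) / y\<^sup>2 / q powr (3/2) \<le> 1 / sqrt y"
    and "(q * y - 1 + (1 - y) powr q) / y\<^sup>2 / q powr (3/2) \<le> 1 / (y * sqrt q)"
proof -
  have qp: "q powr (3/2) = q * sqrt q"
  proof -
    have "q powr (3/2) = q powr 1 * q powr (1/2)" using powr_add[of q 1 "1/2"] by simp
    also have "\<dots> = q * q powr (1/2)" using assms by simp
    finally show ?thesis using assms by (simp add: powr_half_sqrt)
  qed
  have q0: "0 < q * sqrt q" using assms by simp
  have y2: "0 < y\<^sup>2" using assms by simp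
  note k = key[OF assms]
  show "0 \<le> (q * y - 1 + (1 - y) powr q) / y\<^sup>2 / q powr (3/2)"
    using k(1) q0 y2 qp by simp
  have "(q * y - 1 + (1 - y) powr q) / y\<^sup>2 / q powr (3/2) \<le> (q * y * sqrt (q * y)) / y\<^sup>2 / (q * sqrt q)"
    unfolding qp using k(3) q0 y2 by (intro divide_right_mono) auto
  also have "\<dots> = 1 / sqrt y"
    using assms by (simp add: real_sqrt_mult power2_eq_square field_simps)
      (metis real_sqrt_mult_self mult.commute mult.assoc)?
  finally show "(q * y - 1 + (1 - y) powr q) / y\<^sup>2 / q powr (3/2) \<le> 1 / sqrt y" .
  have "(q * y - 1 + (1 - y) powr q) / y\<^sup>2 / q powr (3/2) \<le> (q * y) / y\<^sup>2 / (q * sqrt q)"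
    unfolding qp using k(2) q0 y2 by (intro divide_right_mono) auto
  also have "\<dots> = 1 / (y * sqrt q)"
    using assms by (simp add: power2_eq_square field_simps)
  finally show "(q * y - 1 + (1 - y) powr q) / y\<^sup>2 / q powr (3/2) \<le> 1 / (y * sqrt q)" .
qed

theorem proposition1p5:
  fixes L :: "real measure"
  assumes sets_L: "sets L = sets borel"
    and supp: "emeasure L (UNIV - {0..1}) = 0"
    and prob_or_zero: "emeasure L (space L) = 1 \<or> emeasure L (space L) = 0"
    and no_atom: "emeasure L {0} = 0"
    and fin: "(\<integral>\<^sup>+ y. ennreal (1 / sqrt y) \<partial>L) < \<infinity>"
  shows "((\<lambda>q. Psi1 L q / q powr (3/2)) \<longlongrightarrow> 0) at_top"
proof -
  define s where "s = (\<lambda>q y::real. (q * y - 1 + (1 - y) powr q) / y\<^sup>2 / q powr (3/2))"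
  have meas_eq: "borel_measurable L = borel_measurable borel"
    by (rule measurable_cong_sets[OF sets_L refl])
  have AE01: "AE y in L. 0 < y \<and> y \<le> 1"
  proof (rule AE_I')
    show "(UNIV - {0..1}) \<union> {0} \<in> null_sets L"
      using supp no_atom sets_L by (intro null_sets.Un) (auto simp: null_sets_def)
    show "{x \<in> space L. \<not> (0 < x \<and> x \<le> 1)} \<subseteq> (UNIV - {0..1}) \<union> {0}" by auto
  qed
  have sm: "s q \<in> borel_measurable L" for q
    unfolding meas_eq s_def by measurable
  have wm: "(\<lambda>y::real. 1 / sqrt y) \<in> borel_measurable L"
    unfolding meas_eq by measurable
  have wi: "integrable L (\<lambda>y. 1 / sqrt y)"
    by (rule integrableI_nonneg[OF wm _ fin]) (use AE01 in \<open>eventually_elim, simp\<close>)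
  have lim: "((\<lambda>q. integral\<^sup>L L (s q)) \<longlongrightarrow> integral\<^sup>L L (\<lambda>y. 0::real)) at_top"
  proof (rule integral_dominated_convergence_at_top[OF _ sm wi])
    show "(\<lambda>y. 0::real) \<in> borel_measurable L" by simp
    show "AE y in L. ((\<lambda>q. s q y) \<longlongrightarrow> 0) at_top"
      using AE01
    proof eventually_elim
      fix y :: real assume y: "0 < y \<and> y \<le> 1"
      have t: "((\<lambda>q. 1 / (y * sqrt q)) \<longlongrightarrow> 0) at_top"
        using y by real_asymp
      show "((\<lambda>q. s q y) \<longlongrightarrow> 0) at_top"
      proof (rule tendsto_sandwich[OF _ _ tendsto_const t])
        show "\<forall>\<^sub>F q in at_top. 0 \<le> s q y"
          using eventually_ge_at_top[of "1::real"]
          by eventually_elim (use y pointwise_bound(1) in \<open>auto simp: s_def\<close>)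
        show "\<forall>\<^sub>F q in at_top. s q y \<le> 1 / (y * sqrt q)"
          using eventually_ge_at_top[of "1::real"]
          by eventually_elim (use y pointwise_bound(3) in \<open>auto simp: s_def\<close>)
      qed
    qed
    show "\<forall>\<^sub>F q in at_top. AE y in L. norm (s q y) \<le> 1 / sqrt y"
      using eventually_ge_at_top[of "1::real"]
    proof eventually_elim
      fix q :: real assume q: "1 \<le> q"
      show "AE y in L. norm (s q y) \<le> 1 / sqrt y"
        using AE01
      proof eventually_elim
        fix y :: real assume y: "0 < y \<and> y \<le> 1"
        have a: "0 \<le> s q y" unfolding s_def using pointwise_bound(1)[of y q] y q by simp
        have b: "s q y \<le> 1 / sqrt y" unfolding s_def using pointwise_bound(2)[of y q] y q by simp
        show "norm (s q y) \<le> 1 / sqrt y" using a b by simp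
      qed
    qed
  qed
  have "integral\<^sup>L L (s q) = Psi1 L q / q powr (3/2)" for q
    unfolding s_def Psi1_def by (rule integral_divide_zero)
  with lim show ?thesis by simp
qed

end
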